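(* Consider the channel $\mathbf r=\mathbf s+\boldsymbol\xi$ in $\mathbb R^n$ with $\boldsymbol\xi\sim\mathcal N(\mathbf 0,\sigma_0^2\mathbf I)$ and SNR $\gamma=1/\sigma_0^2>0$, and a decoder whose decision region for each constellation point $\mathbf s_k$ is the ball of a common radius $d>0$ centered at $\mathbf s_k$ (if the received vector lies in no decision region, an error is declared). Then the average symbol error rate satisfies: $P_e''(\gamma)>0$ if $\gamma>(n-2)/d^2$; $P_e''(\gamma)<0$ if $\gamma<(n-2)/d^2$; and $P_e''(\gamma)=0$ if $\gamma=(n-2)/d^2$.
   Context: The constellation $\{\mathbf s_1,\dots,\mathbf s_M\}$ is transmitted with prior probabilities $\pi_k$; the decision regions $\Omega_k$ do not depend on $\gamma$. The symbol error rate given $\mathbf s_k$ is $P_{ek}=1-\Pr[\mathbf r\in\Omega_k\mid \mathbf s=\mathbf s_k]$ and $P_e=\sum_k\pi_kP_{ek}$. Derivatives are with respect to $\gamma$. *)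

theory Defs
  imports "HOL-Analysis.Analysis"
begin

definition iso_gauss_pdf :: "real \<Rightarrow> real^'n \<Rightarrow> real" where
  "iso_gauss_pdf v x =
     (2 * pi * v) powr (- real CARD('n) / 2) * exp (- (norm x * norm x) / (2 * v))"

definition noise_measure :: "real \<Rightarrow> (real^'n) measure" where
  "noise_measure v = density lborel (\<lambda>x. ennreal (iso_gauss_pdf v x))"

definition sym_err :: "real \<Rightarrow> real^'n \<Rightarrow> (real^'n) set \<Rightarrow> real" where
  "sym_err \<gamma> s \<Omega> = 1 - measure (noise_measure (1 / \<gamma>)) {\<xi>. s + \<xi> \<in> \<Omega>}"

definition avg_ser :: "nat \<Rightarrow> (nat \<Rightarrow> real) \<Rightarrow> (nat \<Rightarrow> real^'n) \<Rightarrow> (nat \<Rightarrow> (real^'n) set)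
    \<Rightarrow> real \<Rightarrow> real" where
  "avg_ser M p s \<Omega> \<gamma> = (\<Sum>k<M. p k * sym_err \<gamma> (s k) (\<Omega> k))"

end

theory Submission imports Defs begin

definition gf :: "'a::euclidean_space \<Rightarrow> real" where
  "gf y = exp (- (norm y * norm y) / 2)"

lemma gf_cont: "continuous_on S gf"
  unfolding gf_def by (intro continuous_intros) auto

lemma gf_int_ball: "gf integrable_on ball (0::'a::euclidean_space) r"
proof -
  have "gf absolutely_integrable_on ball (0::'a) r"
    apply (rule measurable_bounded_by_integrable_imp_absolutely_integrable[where g="\<lambda>_. 1"])
    apply (rule continuous_imp_measurable_on_sets_lebesgue[OF gf_cont]) 
    by (auto intro!: integrable_on_const simp: gf_def)
  then show ?thesis using absolutely_integrable_on_def by blast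
qed

lemma content_ball_lebesgue: "r \<ge> 0 \<Longrightarrow> integral (ball (0::'a::euclidean_space) r) (\<lambda>_. 1::real) = unit_ball_vol (DIM('a)) * r ^ DIM('a)"
  proof -
  assume r: "r \<ge> 0"
  have "integral (ball (0::'a) r) (\<lambda>_. 1::real) = measure lebesgue (ball (0::'a) r)"
    by (rule lmeasure_integral[symmetric]) simp
  also have "\<dots> = measure lborel (ball (0::'a) r)" by simp
  finally show ?thesis using content_ball[OF r] by simp
qed

lemma shell_bounds:
  fixes a b :: real
  assumes ab: "0 \<le> a" "a \<le> b"
  defines "I \<equiv> \<lambda>r. integral (ball (0::'a::euclidean_space) r) gf"
      and "V \<equiv> \<lambda>r. integral (ball (0::'a) r) (\<lambda>_. 1::real)"
  shows "exp (- (b*b)/2) * (V b - V a) \<le> I b - I a \<and> I b - I a \<le> exp (- (a*a)/2) * (V b - V a)"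
proof -
  let ?S = "ball (0::'a) b - ball 0 a"
  have sub: "ball (0::'a) a \<subseteq> ball 0 b" using ab by auto
  have neg: "negligible (ball (0::'a) a - ball 0 b)" using sub by simp
  have c1: "(\<lambda>_. 1::real) integrable_on ball (0::'a) r" for r
    by (intro integrable_on_const) simp
  have IS: "integral ?S gf = I b - I a"
    unfolding I_def by (rule integral_setdiff[OF gf_int_ball gf_int_ball neg])
  have VS: "integral ?S (\<lambda>_. 1::real) = V b - V a"
    unfolding V_def by (rule integral_setdiff[OF c1 c1 neg])
  have gS: "gf integrable_on ?S" by (rule integrable_setdiff[OF integrable_integral[OF gf_int_ball] integrable_integral[OF gf_int_ball] neg])
  have cS: "(\<lambda>_. c::real) integrable_on ?S" for c
    by (intro integrable_on_const) auto
  have Sc: "integral ?S (\<lambda>_. c) = c * (V b - V a)" for c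
    using VS integral_mult_right[of ?S c "\<lambda>_. 1::real"] by simp
  have lo: "exp (- (b*b)/2) \<le> gf y" if "y \<in> ?S" for y
  proof -
    have "norm y \<le> b" "0 \<le> norm y" using that by (auto simp: dist_norm)
    then have "norm y * norm y \<le> b * b" by (intro mult_mono) (use ab in auto)
    then show ?thesis unfolding gf_def by simp
  qed
  have hi: "gf y \<le> exp (- (a*a)/2)" if "y \<in> ?S" for y
  proof -
    have "a \<le> norm y" using that by (auto simp: dist_norm)
    then have "a * a \<le> norm y * norm y" using ab by (intro mult_mono) auto
    then show ?thesis unfolding gf_def by simp
  qed
  have "integral ?S (\<lambda>_. exp (- (b*b)/2)) \<le> integral ?S gf"
    by (rule integral_le[OF cS gS]) (use lo in auto)
  moreover have "integral ?S gf \<le> integral ?S (\<lambda>_. exp (- (a*a)/2))"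
    by (rule integral_le[OF gS cS]) (use hi in auto)
  ultimately show ?thesis using IS Sc by simp
qed

lemma I_deriv:
  fixes R :: real
  assumes R: "R > 0"
  defines "I \<equiv> \<lambda>r. integral (ball (0::'a::euclidean_space) r) gf"
  shows "(I has_field_derivative
      exp (- (R*R)/2) * (unit_ball_vol (DIM('a)) * (real DIM('a) * R ^ (DIM('a) - 1)))) (at R)"
proof -
  let ?w = "unit_ball_vol (DIM('a))"
  let ?n = "DIM('a)"
  define V where "V \<equiv> \<lambda>r. integral (ball (0::'a) r) (\<lambda>_. 1::real)"
  define e where "e \<equiv> \<lambda>r::real. exp (- (r*r)/2)"
  define q where "q \<equiv> \<lambda>y. (V y - V R) / (y - R)"
  define W where "W \<equiv> \<lambda>r::real. ?w * r ^ ?n"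
  have VW: "V r = W r" if "r \<ge> 0" for r
    unfolding V_def W_def using content_ball_lebesgue[OF that] by simp
  have dW: "(W has_field_derivative ?w * (real ?n * R ^ (?n - 1))) (at R)"
    unfolding W_def by (auto intro!: derivative_eq_intros)
  have evpos: "eventually (\<lambda>y. y > 0) (at R)"
    using order_tendstoD(1)[OF tendsto_ident_at R] by simp
  have qlim: "(q \<longlongrightarrow> ?w * (real ?n * R ^ (?n - 1))) (at R)"
  proof -
    have "((\<lambda>y. (W y - W R) / (y - R)) \<longlongrightarrow> ?w * (real ?n * R ^ (?n - 1))) (at R)"
      using dW by (simp add: has_field_derivative_iff)
    moreover have "eventually (\<lambda>y. (W y - W R) / (y - R) = q y) (at R)"
      using evpos by eventually_elim (use R VW in \<open>simp add: q_def\<close>)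
    ultimately show ?thesis by (rule tendsto_cong[THEN iffD1, rotated])
  qed
  have elim: "(e \<longlongrightarrow> e R) (at R)"
    unfolding e_def by (intro tendsto_intros) auto
  have wpos: "?w \<ge> 0" by simp
  have qnn: "q y \<ge> 0" if "y > 0" "y \<noteq> R" for y
  proof -
    have "W y - W R \<ge> 0 \<longleftrightarrow> y \<ge> R" using that R wpos unfolding W_def
      by (smt (verit, ccfv_threshold) mult_left_mono power_mono unit_ball_vol_pos of_nat_0_le_iff
          power_strict_mono DIM_positive mult_strict_left_mono)
    then show ?thesis using that R VW unfolding q_def
      by (cases "y > R") (auto intro!: divide_nonneg_pos divide_nonpos_neg)
  qed
  have bnd: "min (e y) (e R) * q y \<le> (I y - I R) / (y - R) \<and>
             (I y - I R) / (y - R) \<le> max (e y) (e R) * q y" if "y > 0" "y \<noteq> R" for y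
  proof (cases "y > R")
    case True
    from shell_bounds[of R y] True R have b: "e y * (V y - V R) \<le> I y - I R" "I y - I R \<le> e R * (V y - V R)"
      by (auto simp: I_def V_def e_def)
    then have "e y * q y \<le> (I y - I R) / (y - R)" "(I y - I R) / (y - R) \<le> e R * q y"
      using True by (auto simp: q_def divide_right_mono)
    moreover have "min (e y) (e R) * q y \<le> e y * q y" "e R * q y \<le> max (e y) (e R) * q y"
      using qnn[OF that] by (auto intro: mult_right_mono)
    ultimately show ?thesis by linarith
  next
    case False
    then have yR: "y < R" using that by simp
    from shell_bounds[of y R] yR that have b: "e R * (V R - V y) \<le> I R - I y" "I R - I y \<le> e y * (V R - V y)"
      by (auto simp: I_def V_def e_def)
    have qe: "q y = (V R - V y) / (R - y)" unfolding q_def by (metis minus_diff_eq minus_divide_divide)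
    have ie: "(I y - I R) / (y - R) = (I R - I y) / (R - y)" by (metis minus_diff_eq minus_divide_divide)
    have "e R * q y \<le> (I y - I R) / (y - R)" "(I y - I R) / (y - R) \<le> e y * q y"
      using b yR unfolding qe ie by (auto simp: divide_right_mono)
    moreover have "min (e y) (e R) * q y \<le> e R * q y" "e y * q y \<le> max (e y) (e R) * q y"
      using qnn[OF that] by (auto intro: mult_right_mono)
    ultimately show ?thesis by linarith
  qed
  have "((\<lambda>y. (I y - I R) / (y - R)) \<longlongrightarrow> e R * (?w * (real ?n * R ^ (?n - 1)))) (at R)"
  proof (rule tendsto_sandwich)
    show "eventually (\<lambda>y. min (e y) (e R) * q y \<le> (I y - I R) / (y - R)) (at R)"
      using evpos eventually_neq_at_within[of R R UNIV] by eventually_elim (use bnd in blast)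
    show "eventually (\<lambda>y. (I y - I R) / (y - R) \<le> max (e y) (e R) * q y) (at R)"
      using evpos eventually_neq_at_within[of R R UNIV] by eventually_elim (use bnd in blast)
    show "((\<lambda>y. min (e y) (e R) * q y) \<longlongrightarrow> e R * (?w * (real ?n * R ^ (?n - 1)))) (at R)"
      using tendsto_mult[OF tendsto_min[OF elim tendsto_const[of "e R"]] qlim] by simp
    show "((\<lambda>y. max (e y) (e R) * q y) \<longlongrightarrow> e R * (?w * (real ?n * R ^ (?n - 1)))) (at R)"
      using tendsto_mult[OF tendsto_max[OF elim tendsto_const[of "e R"]] qlim] by simp
  qed
  then show ?thesis by (simp add: has_field_derivative_iff e_def)
qed


lemma const_id:
  fixes g :: real and n :: nat assumes g: "g > 0"
  shows "(1 / sqrt g) ^ n * (2 * pi * (1/g)) powr (- real n / 2) = (2 * pi) powr (- real n / 2)"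
proof -
  have "(1 / sqrt g) ^ n = (1/g) powr (real n / 2)"
    using g by (simp add: sqrt_def root_powr_inverse powr_realpow[symmetric] powr_powr powr_divide real_root_divide)
  moreover have "(2 * pi * (1/g)) powr (- real n / 2) = (2*pi) powr (- real n / 2) * (1/g) powr (- real n / 2)"
    using powr_mult[of "2*pi" "1/g" "- real n / 2"] g by simp
  moreover have "(1/g) powr (real n / 2) * (1/g) powr (- real n / 2) = 1"
    using g by (simp add: powr_add[symmetric])
  ultimately show ?thesis by (simp add: algebra_simps)
qed



lemma meas_ball:
  fixes s :: "real^'n" and g d :: real
  assumes g: "g > 0" and d: "d > 0"
  shows "measure (noise_measure (1/g)) {\<xi>. s + \<xi> \<in> ball s d}
       = (2 * pi) powr (- real CARD('n) / 2) * integral (ball (0::real^'n) (d * sqrt g)) gf"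
proof -
  let ?n = "CARD('n)"
  let ?K = "(2 * pi) powr (- real ?n / 2)"
  let ?R = "d * sqrt g"
  define c where "c = 1 / sqrt g"
  have c: "c > 0" using g by (simp add: c_def)
  have set_eq: "{\<xi>. s + \<xi> \<in> ball s d} = ball (0::real^'n) d"
    by (auto simp: dist_norm)
  have [measurable]: "iso_gauss_pdf (1/g) \<in> borel_measurable (borel :: (real^'n) measure)"
    unfolding iso_gauss_pdf_def by measurable
  have [measurable]: "ball (0::real^'n) d \<in> sets borel" by simp
  have [measurable]: "ball (0::real^'n) ?R \<in> sets borel" by simp
  have [measurable]: "(\<lambda>x::real^'n. c *\<^sub>R x) \<in> borel_measurable borel" by simp
  have "emeasure (noise_measure (1/g)) (ball (0::real^'n) d)
      = (\<integral>\<^sup>+(x::real^'n). ennreal (iso_gauss_pdf (1/g) x) * indicator (ball 0 d) x \<partial>lborel)"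
    unfolding noise_measure_def by (rule emeasure_density) auto
  also have "\<dots> = (\<integral>\<^sup>+(x::real^'n). ennreal (iso_gauss_pdf (1/g) x) * indicator (ball 0 d) x
        \<partial>(density (distr lborel borel (\<lambda>x. 0 + c *\<^sub>R x)) (\<lambda>_. \<bar>c\<bar>^DIM(real^'n))))"
    by (simp only: lborel_affine[OF less_imp_neq[OF c, symmetric], symmetric])
  also have "\<dots> = (\<integral>\<^sup>+(x::real^'n). ennreal (\<bar>c\<bar>^DIM(real^'n)) * (ennreal (iso_gauss_pdf (1/g) (0 + c *\<^sub>R x)) * indicator (ball 0 d) (0 + c *\<^sub>R x)) \<partial>lborel)"
    by (subst nn_integral_density) (simp_all add: nn_integral_distr)
  also have "\<dots> = (\<integral>\<^sup>+(x::real^'n). ennreal ?K * ennreal (indicator (ball 0 ?R) x * gf x) \<partial>lborel)"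
  proof (rule nn_integral_cong)
    fix x :: "real^'n"
    have nx: "norm (c *\<^sub>R x) * norm (c *\<^sub>R x) / (2 * (1/g)) = norm x * norm x / 2"
      using c g by (simp add: c_def power2_eq_square[symmetric] field_simps)
    have pdf: "iso_gauss_pdf (1/g) (c *\<^sub>R x) = (2 * pi * (1/g)) powr (- real ?n / 2) * gf x"
      unfolding iso_gauss_pdf_def gf_def using nx by (simp add: minus_divide_left[symmetric] del: minus_divide_left)
    have ind: "(c *\<^sub>R x \<in> ball 0 d) \<longleftrightarrow> (x \<in> ball 0 ?R)"
      using c g by (simp add: c_def field_simps)
    have K: "c ^ ?n * (2 * pi * (1/g)) powr (- real ?n / 2) = ?K"
      unfolding c_def by (rule const_id[OF g])
    have ind': "indicator (ball 0 d) (c *\<^sub>R x) = (indicator (ball 0 ?R) x :: ennreal)"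
      using ind by (simp add: indicator_def)
    have Kn: "?K \<ge> 0" "c ^ ?n \<ge> 0" "(2 * pi * (1/g)) powr (- real ?n / 2) * gf x \<ge> 0" using c by (auto simp: gf_def)
    have "ennreal (c ^ ?n) * ennreal ((2 * pi * (1/g)) powr (- real ?n / 2) * gf x)
        = ennreal ?K * ennreal (gf x)"
    proof -
      have e1: "c ^ ?n * ((2 * pi * (1/g)) powr (- real ?n / 2) * gf x) = ?K * gf x"
        using K by (simp only: mult.assoc[symmetric])
      have "gf x \<ge> 0" by (simp add: gf_def)
      then show ?thesis using Kn e1 by (metis ennreal_mult)
    qed
    moreover have "ennreal (\<bar>c\<bar>^DIM(real^'n)) * (ennreal (iso_gauss_pdf (1/g) (0 + c *\<^sub>R x)) * indicator (ball 0 d) (0 + c *\<^sub>R x))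
       = ennreal (c ^ ?n) * ennreal ((2 * pi * (1/g)) powr (- real ?n / 2) * gf x) * indicator (ball 0 ?R) x"
      by (simp only: add_0_left ind' pdf abs_of_pos[OF c] DIM_cart DIM_real mult_1_right mult.assoc)
    ultimately show "ennreal (\<bar>c\<bar>^DIM(real^'n)) * (ennreal (iso_gauss_pdf (1/g) (0 + c *\<^sub>R x)) * indicator (ball 0 d) (0 + c *\<^sub>R x))
        = ennreal ?K * ennreal (indicator (ball 0 ?R) x * gf x)"
      by (cases "x \<in> ball 0 ?R") simp_all
  qed
  also have "\<dots> = ennreal ?K * (\<integral>\<^sup>+(x::real^'n). ennreal (indicator (ball 0 ?R) x * gf x) \<partial>lborel)"
    by (rule nn_integral_cmult) (unfold gf_def, measurable)
  also have "(\<integral>\<^sup>+(x::real^'n). ennreal (indicator (ball 0 ?R) x * gf x) \<partial>lborel) = integral (ball (0::real^'n) ?R) gf"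
    by (intro nn_integral_has_integral_lebesgue[OF _ integrable_integral[OF gf_int_ball]]) (simp add: gf_def)
  finally have "emeasure (noise_measure (1/g)) (ball (0::real^'n) d) = ennreal ?K * ennreal (integral (ball (0::real^'n) ?R) gf)" .
  moreover have "integral (ball (0::real^'n) ?R) gf \<ge> 0"
    by (rule integral_nonneg[OF gf_int_ball]) (simp add: gf_def)
  ultimately show ?thesis
    unfolding set_eq measure_def by (simp add: ennreal_mult''[symmetric])
qed


lemma sqrt_pow_inv:
  fixes g :: real assumes g: "g > 0" and n: "n \<ge> 1"
  shows "sqrt g ^ (n - 1) * inverse (sqrt g) = g powr (real n / 2 - 1)"
proof -
  have "sqrt g ^ (n - 1) = g powr (real (n - 1) / 2)"
    using g by (simp add: powr_half_sqrt[symmetric] powr_realpow[symmetric] powr_powr)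
  moreover have "inverse (sqrt g) = g powr (- 1 / 2)"
    using g by (simp add: powr_half_sqrt[symmetric] powr_minus)
  moreover have "g powr (real (n - 1) / 2) * g powr (- 1 / 2) = g powr (real n / 2 - 1)"
  proof -
    have e: "real (n - 1) / 2 + (- 1 / 2) = real n / 2 - 1" using n by (simp add: of_nat_diff field_simps)
    show ?thesis by (simp only: powr_add[symmetric] e)
  qed
  ultimately show ?thesis by simp
qed

lemma test1: fixes g d :: real assumes "g > 0"
  shows "((\<lambda>g. d * sqrt g) has_field_derivative d * (inverse (sqrt g) / 2)) (at g)"
  using assms by (auto intro!: derivative_eq_intros)

lemma test2: fixes g a b :: real assumes "g > 0"
  shows "((\<lambda>g. - c * (g powr a * exp (b * g))) has_field_derivative
     - c * (a * g powr (a - 1) * exp (b * g) + g powr a * (exp (b * g) * b))) (at g)"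
  using assms by (auto intro!: derivative_eq_intros)

theorem corollary3p1:
  fixes s :: "nat \<Rightarrow> real^'n" and p :: "nat \<Rightarrow> real" and M :: nat and d \<gamma> :: real
  assumes "M \<ge> 1"
    and "\<forall>k<M. p k \<ge> 0"
    and "(\<Sum>k<M. p k) = 1"
    and "d > 0"
    and "\<forall>j<M. \<forall>k<M. j \<noteq> k \<longrightarrow> ball (s j) d \<inter> ball (s k) d = {}"
    and "\<gamma> > 0"
  defines "Pe \<equiv> avg_ser M p s (\<lambda>k. ball (s k) d)"
  shows "(\<forall>g>0. Pe differentiable (at g))
    \<and> (deriv Pe) differentiable (at \<gamma>)
    \<and> (\<gamma> > (real CARD('n) - 2) / d^2 \<longrightarrow> deriv (deriv Pe) \<gamma> > 0)
    \<and> (\<gamma> < (real CARD('n) - 2) / d^2 \<longrightarrow> deriv (deriv Pe) \<gamma> < 0)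
    \<and> (\<gamma> = (real CARD('n) - 2) / d^2 \<longrightarrow> deriv (deriv Pe) \<gamma> = 0)"
proof -
  note d = assms(4) and gam = assms(6) and psum = assms(3)
  define n where "n = CARD('n)"
  have n1: "n \<ge> 1" unfolding n_def by (simp add: Suc_le_eq)
  define K0 where "K0 = (2 * pi) powr (- real n / 2)"
  define w where "w = unit_ball_vol (real n)"
  define I where "I = (\<lambda>r. integral (ball (0::real^'n) r) gf)"
  define C where "C = K0 * w * real n * d ^ n / 2"
  define D1 where "D1 = (\<lambda>g::real. - C * (g powr (real n / 2 - 1) * exp (- (d * d / 2) * g)))"
  define D2 where "D2 = (\<lambda>g::real. - C * ((real n / 2 - 1) * g powr (real n / 2 - 1 - 1) * exp (- (d * d / 2) * g)
        + g powr (real n / 2 - 1) * (exp (- (d * d / 2) * g) * (- (d * d / 2)))))"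
  have Cpos: "C > 0" using d n1 unfolding C_def K0_def w_def by (auto intro!: mult_pos_pos divide_pos_pos)
  have Pe_eq: "Pe g = 1 - K0 * I (d * sqrt g)" if g: "g > 0" for g
  proof -
    have "Pe g = (\<Sum>k<M. p k * (1 - K0 * I (d * sqrt g)))"
    proof -
      have mb: "measure (noise_measure (1/g)) {\<xi>. s k + \<xi> \<in> ball (s k) d} = K0 * I (d * sqrt g)" for k
        using meas_ball[OF g d, of "s k"] by (simp only: K0_def I_def n_def)
      show ?thesis unfolding Pe_def avg_ser_def sym_err_def mb ..
    qed
    also have "\<dots> = 1 - K0 * I (d * sqrt g)"
      using psum by (simp add: sum_distrib_right[symmetric])
    finally show ?thesis .
  qed
  have dPe: "(Pe has_field_derivative D1 g) (at g)" if g: "g > 0" for g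
  proof -
    let ?R = "d * sqrt g"
    have R: "?R > 0" using d g by simp
    have dI: "(I has_field_derivative exp (- (?R * ?R) / 2) * (w * (real n * ?R ^ (n - 1)))) (at ?R)"
      using I_deriv[OF R, where 'a="real^'n"] by (simp add: I_def w_def n_def)
    have dsq: "((\<lambda>g. d * sqrt g) has_field_derivative d * (inverse (sqrt g) / 2)) (at g)"
      using g by (auto intro!: derivative_eq_intros)
    have dF: "((\<lambda>g. 1 - K0 * I (d * sqrt g)) has_field_derivative
        - (K0 * (exp (- (?R * ?R) / 2) * (w * (real n * ?R ^ (n - 1))) * (d * (inverse (sqrt g) / 2))))) (at g)"
      by (auto intro!: derivative_eq_intros DERIV_chain2[OF dI dsq])
    have RR: "?R * ?R = d * d * g" using g by (simp add: algebra_simps)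
    have Rp: "?R ^ (n - 1) * (d * inverse (sqrt g)) = d ^ n * g powr (real n / 2 - 1)"
    proof -
      have "?R ^ (n - 1) * (d * inverse (sqrt g)) = (d ^ (n - 1) * d) * (sqrt g ^ (n - 1) * inverse (sqrt g))"
        by (simp add: power_mult_distrib algebra_simps)
      also have "\<dots> = d ^ n * g powr (real n / 2 - 1)"
      proof -
        have "d ^ (n - 1) * d = d ^ n" using n1 by (metis power_minus_mult zero_less_iff_neq_zero less_le_trans zero_less_one)
        then show ?thesis using sqrt_pow_inv[OF g n1] by simp
      qed
      finally show ?thesis .
    qed
    have "- (K0 * (exp (- (?R * ?R) / 2) * (w * (real n * ?R ^ (n - 1))) * (d * (inverse (sqrt g) / 2)))) = D1 g"
    proof -
      have "- (K0 * (exp (- (?R * ?R) / 2) * (w * (real n * ?R ^ (n - 1))) * (d * (inverse (sqrt g) / 2))))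
          = - (K0 * w * real n / 2) * exp (- (d * d / 2) * g) * (?R ^ (n - 1) * (d * inverse (sqrt g)))"
        unfolding RR by (simp add: algebra_simps)
      also have "\<dots> = D1 g" unfolding Rp D1_def C_def by (simp add: algebra_simps)
      finally show ?thesis .
    qed
    with dF have dF': "((\<lambda>g. 1 - K0 * I (d * sqrt g)) has_field_derivative D1 g) (at g)" by simp
    have ev: "eventually (\<lambda>x. x > 0) (nhds g)" using eventually_nhds_in_open[of "{0<..}" g] g by simp
    show ?thesis
      by (rule DERIV_cong_ev[THEN iffD2, OF refl _ refl dF'])
         (use ev in \<open>eventually_elim, simp add: Pe_eq\<close>)
  qed
  have dD1: "(D1 has_field_derivative D2 g) (at g)" if g: "g > 0" for g
    unfolding D1_def D2_def using g by (auto intro!: derivative_eq_intros)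
  have diff1: "\<forall>g>0. Pe differentiable (at g)"
    using dPe real_differentiable_def by blast
  have evg: "eventually (\<lambda>x. x > 0) (nhds \<gamma>)"
    using eventually_nhds_in_open[of "{0<..}" \<gamma>] gam by simp
  have dd: "(deriv Pe has_field_derivative D2 \<gamma>) (at \<gamma>)"
  proof (rule DERIV_cong_ev[THEN iffD2, OF refl _ refl dD1[OF gam]])
    show "eventually (\<lambda>x. deriv Pe x = D1 x) (nhds \<gamma>)"
      using evg by eventually_elim (use dPe DERIV_imp_deriv in blast)
  qed
  have diff2: "deriv Pe differentiable (at \<gamma>)"
    using dd real_differentiable_def by blast
  have dd2: "deriv (deriv Pe) \<gamma> = D2 \<gamma>" using dd by (rule DERIV_imp_deriv)
  have D2f: "D2 \<gamma> = C * exp (- (d * d / 2) * \<gamma>) * \<gamma> powr (real n / 2 - 1 - 1) * ((d * d * \<gamma> - (real n - 2)) / 2)"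
  proof -
    have "\<gamma> powr (real n / 2 - 1) = \<gamma> powr (real n / 2 - 1 - 1) * \<gamma>"
    proof -
      have "\<gamma> powr (real n / 2 - 1 - 1) * \<gamma> = \<gamma> powr (real n / 2 - 1 - 1) * \<gamma> powr 1" using gam by simp
      also have "\<dots> = \<gamma> powr (real n / 2 - 1 - 1 + 1)" by (simp only: powr_add)
      also have "\<dots> = \<gamma> powr (real n / 2 - 1)" by simp
      finally show ?thesis by simp
    qed
    then show ?thesis unfolding D2_def by (simp add: algebra_simps)
  qed
  have pos: "C * exp (- (d * d / 2) * \<gamma>) * \<gamma> powr (real n / 2 - 1 - 1) > 0"
    using Cpos gam by simp
  have d2: "d^2 > 0" using d by simp
  have iff1: "\<gamma> > (real n - 2) / d^2 \<longleftrightarrow> d * d * \<gamma> - (real n - 2) > 0"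
    using d2 by (simp add: divide_less_eq power2_eq_square algebra_simps)
  have iff2: "\<gamma> < (real n - 2) / d^2 \<longleftrightarrow> d * d * \<gamma> - (real n - 2) < 0"
    using d2 by (simp add: less_divide_eq power2_eq_square algebra_simps)
  have iff3: "\<gamma> = (real n - 2) / d^2 \<longleftrightarrow> d * d * \<gamma> - (real n - 2) = 0"
    using d by (simp add: eq_divide_eq power2_eq_square algebra_simps)
  show ?thesis
    unfolding n_def[symmetric] dd2 D2f
    using diff1 diff2 pos iff1 iff2 iff3
    by (auto simp: mult_pos_neg zero_less_mult_iff mult_less_0_iff)
qed

end
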